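(* Let $\mathcal S_1$ and $\mathcal S_2$ be qubit spin substitutions with digit sets $\mathcal D_1,\mathcal D_2$, spin matrices $W_1,W_2$ and spin groups $G_1,G_2$. Let $\mathcal S$ be a qubit spin substitution with spin group $G=G_1\times G_2$ on a digit system $(Q,\mathcal D)$ (in any dimension) with $|\mathcal D|=|\mathcal D_1|\cdot|\mathcal D_2|$, where via a bijection $\mathcal D\to\mathcal D_1\times\mathcal D_2$, $\vec d\mapsto(\vec d_1,\vec d_2)$, the spin matrix is $W(\vec d,\vec d')=(W_1(\vec d_1,\vec d_1'),W_2(\vec d_2,\vec d_2'))$ (i.e. $W=W_1\otimes W_2$). Then: (1) $\mathcal S$ is primitive if and only if $\mathcal S_1$ and $\mathcal S_2$ are both primitive. (2) Let $\chi=\chi_1\otimes\chi_2\in\widehat{G_1\times G_2}$ with $\chi_i\in\widehat{G_i}$. Then $\mathcal S$ is $\chi$-unitary if and only if $\mathcal S_1$ is $\chi_1$-unitary and $\mathcal S_2$ is $\chi_2$-unitary; and $\mathcal S$ is $\chi$-rank-1 if and only if $\mathcal S_1$ is $\chi_1$-rank-1 and $\mathcal S_2$ is $\chi_2$-rank-1.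
   Context: A digit system $(Q,\mathcal D)$: $Q$ an expansive endomorphism of $\mathbb Z^m$, $\mathcal D$ a complete set of coset representatives of $\mathbb Z^m/Q\mathbb Z^m$. A qubit spin substitution given by $(Q,\mathcal D)$, a finite abelian group $G$ and $W:\mathcal D\times\mathcal D\to G$ has alphabet $G\times\mathcal D$ (letters $g\mathsf d$) and rule $\mathcal S(g\mathsf d,\vec d')=(gW(\vec d,\vec d'))\mathsf d'$. It is primitive if its substitution matrix $M_{\mathsf a\mathsf b}=\#\{\vec d:\mathcal S(\mathsf b,\vec d)=\mathsf a\}$ has a power with all entries positive. For $\chi\in\widehat G$, $\chi(W)=(\chi(W(\vec d,\vec d')))_{\vec d,\vec d'}$; $\mathcal S$ is $\chi$-unitary if $\frac{1}{\sqrt{|\mathcal D|}}\chi(W)$ is unitary and $\chi$-rank-1 if $\chi(W)$ has rank 1. $(\chi_1\otimes\chi_2)(g_1,g_2)=\chi_1(g_1)\chi_2(g_2)$. *)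

theory Defs
  imports "HOL-Analysis.Analysis" "HOL-Library.Product_Plus" "HOL-Library.Function_Algebras"
begin

definition expansive :: "int^'m^'m \<Rightarrow> bool" where
  "expansive Q \<longleftrightarrow>
     (\<forall>(lam::complex) (v::complex^'m). v \<noteq> 0 \<and> (\<chi> i j. of_int (Q$i$j)) *v v = lam *s v \<longrightarrow> 1 < cmod lam)"

definition complete_residue_system :: "int^'m^'m \<Rightarrow> (int^'m) set \<Rightarrow> bool" where
  "complete_residue_system Q D \<longleftrightarrow> (\<forall>z. \<exists>!d. d \<in> D \<and> (\<exists>y. z - d = Q *v y))"

definition digit_system :: "int^'m^'m \<Rightarrow> (int^'m) set \<Rightarrow> bool" where
  "digit_system Q D \<longleftrightarrow> expansive Q \<and> complete_residue_system Q D"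

definition alphabet :: "'d set \<Rightarrow> ('g \<times> 'd) set" where
  "alphabet D = UNIV \<times> D"

definition spin_subst :: "('d \<Rightarrow> 'd \<Rightarrow> 'g::ab_group_add) \<Rightarrow> 'g \<times> 'd \<Rightarrow> 'd \<Rightarrow> 'g \<times> 'd" where
  "spin_subst W b d' = (fst b + W (snd b) d', d')"

definition subst_matrix :: "'d set \<Rightarrow> ('d \<Rightarrow> 'd \<Rightarrow> 'g::ab_group_add) \<Rightarrow> 'g \<times> 'd \<Rightarrow> 'g \<times> 'd \<Rightarrow> nat" where
  "subst_matrix D W a b = card {d' \<in> D. spin_subst W b d' = a}"

fun mat_pow :: "'a set \<Rightarrow> ('a \<Rightarrow> 'a \<Rightarrow> nat) \<Rightarrow> nat \<Rightarrow> 'a \<Rightarrow> 'a \<Rightarrow> nat" where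
  "mat_pow A M 0 = (\<lambda>a b. if a = b then 1 else 0)"
| "mat_pow A M (Suc k) = (\<lambda>a c. \<Sum>b\<in>A. M a b * mat_pow A M k b c)"

definition primitive :: "'d set \<Rightarrow> ('d \<Rightarrow> 'd \<Rightarrow> 'g::ab_group_add) \<Rightarrow> bool" where
  "primitive D W \<longleftrightarrow>
     (\<exists>k\<ge>1. \<forall>a\<in>alphabet D. \<forall>b\<in>alphabet D. 0 < mat_pow (alphabet D) (subst_matrix D W) k a b)"

definition character :: "('g::ab_group_add \<Rightarrow> complex) \<Rightarrow> bool" where
  "character chi \<longleftrightarrow> (\<forall>a b. chi (a + b) = chi a * chi b) \<and> (\<forall>a. cmod (chi a) = 1)"

definition char_tensor :: "('g1 \<Rightarrow> complex) \<Rightarrow> ('g2 \<Rightarrow> complex) \<Rightarrow> 'g1 \<times> 'g2 \<Rightarrow> complex" where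
  "char_tensor chi1 chi2 g = chi1 (fst g) * chi2 (snd g)"

definition unitary_on :: "'d set \<Rightarrow> ('d \<Rightarrow> 'd \<Rightarrow> complex) \<Rightarrow> bool" where
  "unitary_on D U \<longleftrightarrow>
     (\<forall>d\<in>D. \<forall>d'\<in>D. (\<Sum>e\<in>D. U d e * cnj (U d' e)) = (if d = d' then 1 else 0)) \<and>
     (\<forall>d\<in>D. \<forall>d'\<in>D. (\<Sum>e\<in>D. cnj (U e d) * U e d') = (if d = d' then 1 else 0))"

text \<open>Rank = dimension of the column space (columns as functions D -> C, zero outside D).\<close>
definition rank_on :: "'d set \<Rightarrow> ('d \<Rightarrow> 'd \<Rightarrow> complex) \<Rightarrow> nat" where
  "rank_on D A = vector_space.dim (\<lambda>(c::complex) (f::'d \<Rightarrow> complex). (\<lambda>x. c * f x))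
                   ((\<lambda>e. (\<lambda>d. if d \<in> D then A d e else 0)) ` D)"

definition chi_matrix :: "('g \<Rightarrow> complex) \<Rightarrow> ('d \<Rightarrow> 'd \<Rightarrow> 'g) \<Rightarrow> 'd \<Rightarrow> 'd \<Rightarrow> complex" where
  "chi_matrix chi W d d' = chi (W d d')"

definition chi_unitary :: "'d set \<Rightarrow> ('d \<Rightarrow> 'd \<Rightarrow> 'g) \<Rightarrow> ('g \<Rightarrow> complex) \<Rightarrow> bool" where
  "chi_unitary D W chi \<longleftrightarrow>
     unitary_on D (\<lambda>d d'. chi_matrix chi W d d' / complex_of_real (sqrt (real (card D))))"

definition chi_rank1 :: "'d set \<Rightarrow> ('d \<Rightarrow> 'd \<Rightarrow> 'g) \<Rightarrow> ('g \<Rightarrow> complex) \<Rightarrow> bool" where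
  "chi_rank1 D W chi \<longleftrightarrow> rank_on D (chi_matrix chi W) = 1"

end

theory Submission
  imports Defs
begin


lemma fun_vs: "vector_space (\<lambda>(c::complex) (f::'d \<Rightarrow> complex). (\<lambda>x. c * f x))"
  by unfold_locales (auto simp: fun_eq_iff algebra_simps)

interpretation fvs: vector_space "\<lambda>(c::complex) (f::'d \<Rightarrow> complex). (\<lambda>x. c * f x)"
  by (rule fun_vs)

definition cross :: "'d set \<Rightarrow> ('d \<Rightarrow> 'd \<Rightarrow> complex) \<Rightarrow> bool" where
  "cross D A \<longleftrightarrow> (\<forall>d\<in>D. \<forall>d'\<in>D. \<forall>e\<in>D. \<forall>e'\<in>D. A d e * A d' e' = A d e' * A d' e)"

lemma rank1_iff:
  fixes D :: "'d set"
  assumes nz: "\<forall>d\<in>D. \<forall>e\<in>D. A d e \<noteq> 0"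
  shows "rank_on D A = 1 \<longleftrightarrow> D \<noteq> {} \<and> cross D A"
proof -
  define col where "col e = (\<lambda>d. if d \<in> D then A d e else 0)" for e
  have r: "rank_on D A = fvs.dim (col ` D)" unfolding rank_on_def col_def by simp
  show ?thesis
  proof
    assume h: "rank_on D A = 1"
    have "D \<noteq> {}"
    proof
      assume "D = {}"
      then have "col ` D = {}" by simp
      moreover have "fvs.dim ({}::('d \<Rightarrow> complex) set) = 0"
        using fvs.dim_eq_card_independent[OF fvs.independent_empty] by simp
      ultimately show False using h r by simp
    qed
    moreover
    obtain B where B: "B \<subseteq> col ` D" "fvs.independent B" "col ` D \<subseteq> fvs.span B" "card B = 1"
      using fvs.basis_exists[of "col ` D"] h r by metis
    then obtain v where v: "B = {v}" by (meson card_1_singletonE)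
    have sp: "\<forall>e\<in>D. \<exists>k. col e = (\<lambda>x. k * v x)"
      using B(3) unfolding v fvs.span_singleton by auto
    have "cross D A" unfolding cross_def
    proof (intro ballI)
      fix d d' e e' assume "d \<in> D" "d' \<in> D" "e \<in> D" "e' \<in> D"
      then obtain k k' where k: "col e = (\<lambda>x. k * v x)" "col e' = (\<lambda>x. k' * v x)" using sp by metis
      have "A d e = k * v d" "A d' e = k * v d'" "A d e' = k' * v d" "A d' e' = k' * v d'"
        using k \<open>d \<in> D\<close> \<open>d' \<in> D\<close> unfolding col_def fun_eq_iff by metis+
      then show "A d e * A d' e' = A d e' * A d' e" by simp
    qed
    ultimately show "D \<noteq> {} \<and> cross D A" by blast
  next
    assume h: "D \<noteq> {} \<and> cross D A"
    then obtain e0 where e0: "e0 \<in> D" by blast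
    have v0: "col e0 \<noteq> 0"
    proof
      assume "col e0 = 0"
      then have "col e0 e0 = 0" by simp
      then show False using nz e0 unfolding col_def by auto
    qed
    have sub: "col ` D \<subseteq> fvs.span {col e0}"
    proof
      fix f assume "f \<in> col ` D"
      then obtain e where e: "e \<in> D" "f = col e" by blast
      have "col e = (\<lambda>x. (A e0 e / A e0 e0) * col e0 x)"
      proof
        fix x show "col e x = (A e0 e / A e0 e0) * col e0 x"
        proof (cases "x \<in> D")
          case True
          have "A x e * A e0 e0 = A x e0 * A e0 e" using h True e0 e unfolding cross_def by metis
          then show ?thesis using True nz e0 unfolding col_def by (simp add: field_simps)
        qed (simp add: col_def)
      qed
      then show "f \<in> fvs.span {col e0}" unfolding fvs.span_singleton e by (metis rangeI)
    qed
    have "fvs.span (col ` D) = fvs.span {col e0}"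
      unfolding fvs.span_eq using sub e0 by (auto intro: fvs.span_base)
    then have "fvs.dim (col ` D) = fvs.dim {col e0}" by (metis fvs.dim_span)
    moreover have "fvs.dim {col e0} = 1"
      using fvs.dim_eq_card_independent[of "{col e0}"] fvs.dependent_single[of "col e0"] v0 by simp
    ultimately show "rank_on D A = 1" using r by simp
  qed
qed



definition gram :: "'d set \<Rightarrow> ('d \<Rightarrow> 'd \<Rightarrow> complex) \<Rightarrow> 'd \<Rightarrow> 'd \<Rightarrow> complex" where
  "gram D A d d' = (\<Sum>e\<in>D. A d e * cnj (A d' e))"

definition offdiag :: "'d set \<Rightarrow> ('d \<Rightarrow> 'd \<Rightarrow> complex) \<Rightarrow> bool" where
  "offdiag D A \<longleftrightarrow> (\<forall>d\<in>D. \<forall>d'\<in>D. d \<noteq> d' \<longrightarrow> gram D A d d' = 0)"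

lemma gram_diag:
  assumes "\<forall>d\<in>D. \<forall>e\<in>D. cmod (A d e) = 1" "d \<in> D"
  shows "gram D A d d = of_nat (card D)"
proof -
  have "\<forall>e\<in>D. A d e * cnj (A d e) = 1"
  proof
    fix e assume "e \<in> D"
    have "A d e * cnj (A d e) = of_real ((cmod (A d e))\<^sup>2)" by (simp only: complex_norm_square)
    then show "A d e * cnj (A d e) = 1" using assms \<open>e \<in> D\<close> by simp
  qed
  then show ?thesis unfolding gram_def by simp
qed

lemma unitary_iff:
  fixes D :: "'d set"
  assumes fin: "finite D" and m: "\<forall>d\<in>D. \<forall>e\<in>D. cmod (A d e) = 1"
  shows "unitary_on D (\<lambda>d e. A d e / complex_of_real (sqrt (real (card D)))) \<longleftrightarrow>
         offdiag D A \<and> offdiag D (\<lambda>d e. A e d)"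
proof -
  define s where "s = complex_of_real (sqrt (real (card D)))"
  have cs: "cnj s = s" unfolding s_def by simp
  have ss: "s * s = of_nat (card D)" unfolding s_def of_real_mult[symmetric]
    by simp
  have g1: "(\<Sum>e\<in>D. (A d e / s) * cnj (A d' e / s)) = gram D A d d' / of_nat (card D)" for d d'
    unfolding gram_def sum_divide_distrib
    by (rule sum.cong) (auto simp: cs ss[symmetric])
  have g2: "(\<Sum>e\<in>D. cnj (A e d / s) * (A e d' / s)) = gram D (\<lambda>d e. A e d) d' d / of_nat (card D)" for d d'
    unfolding gram_def sum_divide_distrib
    by (rule sum.cong) (auto simp: cs ss[symmetric] mult.commute)
  have m2: "\<forall>d\<in>D. \<forall>e\<in>D. cmod ((\<lambda>d e. A e d) d e) = 1" using m by simp
  show ?thesis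
  proof (cases "D = {}")
    case True then show ?thesis unfolding unitary_on_def offdiag_def by simp
  next
    case False
    then have n0: "(of_nat (card D) :: complex) \<noteq> 0" using fin by simp
    show ?thesis
      unfolding unitary_on_def s_def[symmetric] g1 g2 offdiag_def
      using gram_diag[OF m] gram_diag[OF m2] n0
      by (auto simp: divide_eq_0_iff)
  qed
qed

lemma gram_prod:
  assumes bij: "bij_betw \<phi> D (D1 \<times> D2)"
    and A: "\<forall>d\<in>D. \<forall>e\<in>D. A d e = A1 (fst (\<phi> d)) (fst (\<phi> e)) * A2 (snd (\<phi> d)) (snd (\<phi> e))"
    and d: "d \<in> D" "d' \<in> D"
  shows "gram D A d d' = gram D1 A1 (fst (\<phi> d)) (fst (\<phi> d')) * gram D2 A2 (snd (\<phi> d)) (snd (\<phi> d'))"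
proof -
  define f where "f p = A1 (fst (\<phi> d)) (fst p) * A2 (snd (\<phi> d)) (snd p) *
      cnj (A1 (fst (\<phi> d')) (fst p) * A2 (snd (\<phi> d')) (snd p))" for p
  have "gram D A d d' = (\<Sum>e\<in>D. f (\<phi> e))"
    unfolding gram_def f_def using A d by (intro sum.cong) auto
  also have "\<dots> = (\<Sum>p\<in>D1 \<times> D2. f p)"
    using sum.reindex_bij_betw[OF bij, of f] .
  also have "\<dots> = (\<Sum>x\<in>D1. \<Sum>y\<in>D2. f (x, y))"
    by (rule sum.cartesian_product')
  also have "\<dots> = (\<Sum>x\<in>D1. \<Sum>y\<in>D2. (A1 (fst (\<phi> d)) x * cnj (A1 (fst (\<phi> d')) x)) *
                 (A2 (snd (\<phi> d)) y * cnj (A2 (snd (\<phi> d')) y)))"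
    unfolding f_def by (simp add: algebra_simps)
  also have "\<dots> = gram D1 A1 (fst (\<phi> d)) (fst (\<phi> d')) * gram D2 A2 (snd (\<phi> d)) (snd (\<phi> d'))"
    unfolding gram_def sum_product ..
  finally show ?thesis .
qed

lemma offdiag_prod:
  assumes bij: "bij_betw \<phi> D (D1 \<times> D2)"
    and A: "\<forall>d\<in>D. \<forall>e\<in>D. A d e = A1 (fst (\<phi> d)) (fst (\<phi> e)) * A2 (snd (\<phi> d)) (snd (\<phi> e))"
    and m1: "\<forall>d\<in>D1. \<forall>e\<in>D1. cmod (A1 d e) = 1"
    and m2: "\<forall>d\<in>D2. \<forall>e\<in>D2. cmod (A2 d e) = 1"
    and fin: "finite D1" "finite D2" and ne: "D1 \<noteq> {}" "D2 \<noteq> {}"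
  shows "offdiag D A \<longleftrightarrow> offdiag D1 A1 \<and> offdiag D2 A2"
proof -
  define \<psi> where "\<psi> = inv_into D \<phi>"
  have \<psi>1: "p \<in> D1 \<times> D2 \<Longrightarrow> \<psi> p \<in> D \<and> \<phi> (\<psi> p) = p" for p
    using bij unfolding \<psi>_def bij_betw_def by (auto intro: inv_into_into f_inv_into_f)
  have \<phi>1: "d \<in> D \<Longrightarrow> \<phi> d \<in> D1 \<times> D2" for d using bij unfolding bij_betw_def by auto
  have inj: "d \<in> D \<Longrightarrow> d' \<in> D \<Longrightarrow> \<phi> d = \<phi> d' \<Longrightarrow> d = d'" for d d'
    using bij unfolding bij_betw_def inj_on_def by auto
  show ?thesis
  proof
    assume h: "offdiag D A"
    obtain x1 where x1: "x1 \<in> D1" using ne by blast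
    obtain x2 where x2: "x2 \<in> D2" using ne by blast
    have "offdiag D1 A1" unfolding offdiag_def
    proof (intro ballI impI)
      fix a b assume ab: "a \<in> D1" "b \<in> D1" "a \<noteq> b"
      let ?d = "\<psi> (a, x2)" and ?d' = "\<psi> (b, x2)"
      have dd: "?d \<in> D" "?d' \<in> D" "\<phi> ?d = (a, x2)" "\<phi> ?d' = (b, x2)" using \<psi>1 ab x2 by auto
      then have "?d \<noteq> ?d'" using ab by auto
      then have "gram D A ?d ?d' = 0" using h dd(1,2) unfolding offdiag_def by simp
      moreover have "gram D A ?d ?d' = gram D1 A1 a b * gram D2 A2 x2 x2"
        using gram_prod[OF bij A dd(1,2)] dd by simp
      moreover have "gram D2 A2 x2 x2 \<noteq> 0" using gram_diag[OF m2 x2] fin ne by simp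
      ultimately show "gram D1 A1 a b = 0" by simp
    qed
    moreover have "offdiag D2 A2" unfolding offdiag_def
    proof (intro ballI impI)
      fix a b assume ab: "a \<in> D2" "b \<in> D2" "a \<noteq> b"
      let ?d = "\<psi> (x1, a)" and ?d' = "\<psi> (x1, b)"
      have dd: "?d \<in> D" "?d' \<in> D" "\<phi> ?d = (x1, a)" "\<phi> ?d' = (x1, b)" using \<psi>1 ab x1 by auto
      then have "?d \<noteq> ?d'" using ab by auto
      then have "gram D A ?d ?d' = 0" using h dd(1,2) unfolding offdiag_def by simp
      moreover have "gram D A ?d ?d' = gram D1 A1 x1 x1 * gram D2 A2 a b"
        using gram_prod[OF bij A dd(1,2)] dd by simp
      moreover have "gram D1 A1 x1 x1 \<noteq> 0" using gram_diag[OF m1 x1] fin ne by simp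
      ultimately show "gram D2 A2 a b = 0" by simp
    qed
    ultimately show "offdiag D1 A1 \<and> offdiag D2 A2" by blast
  next
    assume h: "offdiag D1 A1 \<and> offdiag D2 A2"
    show "offdiag D A" unfolding offdiag_def
    proof (intro ballI impI)
      fix d d' assume dd: "d \<in> D" "d' \<in> D" "d \<noteq> d'"
      then have "\<phi> d \<noteq> \<phi> d'" using inj by blast
      then have "fst (\<phi> d) \<noteq> fst (\<phi> d') \<or> snd (\<phi> d) \<noteq> snd (\<phi> d')" by (auto simp: prod_eq_iff)
      moreover have "fst (\<phi> d) \<in> D1" "fst (\<phi> d') \<in> D1" "snd (\<phi> d) \<in> D2" "snd (\<phi> d') \<in> D2"
        using \<phi>1[OF dd(1)] \<phi>1[OF dd(2)] by (auto simp: mem_Times_iff)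
      ultimately have "gram D1 A1 (fst (\<phi> d)) (fst (\<phi> d')) = 0 \<or> gram D2 A2 (snd (\<phi> d)) (snd (\<phi> d')) = 0"
        using h unfolding offdiag_def by blast
      then show "gram D A d d' = 0"
        using gram_prod[OF bij A dd(1,2)] by auto
    qed
  qed
qed




definition conn :: "'d set \<Rightarrow> ('d \<Rightarrow> 'd \<Rightarrow> 'g::ab_group_add) \<Rightarrow> nat \<Rightarrow> bool" where
  "conn D W k \<longleftrightarrow> (\<forall>d0\<in>D. \<forall>d\<in>D. \<forall>h. \<exists>ds. ds 0 = d0 \<and> ds k = d \<and> (\<forall>i\<le>k. ds i \<in> D) \<and>
      h = (\<Sum>i<k. W (ds i) (ds (Suc i))))"

lemma connD: "conn D W k \<Longrightarrow> d0 \<in> D \<Longrightarrow> d \<in> D \<Longrightarrow>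
  \<exists>ds. ds 0 = d0 \<and> ds k = d \<and> (\<forall>i\<le>k. ds i \<in> D) \<and> h = (\<Sum>i<k. W (ds i) (ds (Suc i)))"
  unfolding conn_def by blast

lemma M_pos: "0 < subst_matrix D W a b \<longleftrightarrow> snd a \<in> D \<and> fst a = fst b + W (snd b) (snd a)"
proof -
  have "{d' \<in> D. spin_subst W b d' = a} = (if snd a \<in> D \<and> fst a = fst b + W (snd b) (snd a) then {snd a} else {})"
    by (cases a) (auto simp: spin_subst_def)
  then show ?thesis unfolding subst_matrix_def by (simp split: if_split)
qed

lemma nat_sum_pos: "finite A \<Longrightarrow> 0 < sum (f::'a \<Rightarrow> nat) A \<longleftrightarrow> (\<exists>x\<in>A. 0 < f x)"
proof -
  assume fin: "finite A"
  have "0 < sum f A \<longleftrightarrow> sum f A \<noteq> 0" by simp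
  also have "\<dots> \<longleftrightarrow> \<not> (\<forall>x\<in>A. f x = 0)" using sum_eq_0_iff[OF fin, of f] by simp
  also have "\<dots> \<longleftrightarrow> (\<exists>x\<in>A. 0 < f x)" by auto
  finally show ?thesis .
qed



lemma pow_pos:
  fixes W :: "'d \<Rightarrow> 'd \<Rightarrow> 'g::{finite,ab_group_add}"
  assumes fin: "finite D" and c: "c \<in> alphabet D"
  shows "a \<in> alphabet D \<Longrightarrow> 0 < mat_pow (alphabet D) (subst_matrix D W) k a c \<longleftrightarrow>
     (\<exists>ds. ds 0 = snd c \<and> ds k = snd a \<and> (\<forall>i\<le>k. ds i \<in> D) \<and> fst a = fst c + (\<Sum>i<k. W (ds i) (ds (Suc i))))"
proof (induction k arbitrary: a)
  case 0
  then show ?case using c by (cases a; cases c) (auto simp: alphabet_def)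
next
  case (Suc k)
  have finA: "finite (alphabet D :: ('g \<times> 'd) set)" unfolding alphabet_def using fin by simp
  have "0 < mat_pow (alphabet D) (subst_matrix D W) (Suc k) a c \<longleftrightarrow>
     (\<exists>b\<in>alphabet D. 0 < subst_matrix D W a b \<and> 0 < mat_pow (alphabet D) (subst_matrix D W) k b c)"
    using finA by (simp add: nat_sum_pos)
  also have "\<dots> \<longleftrightarrow> (\<exists>b\<in>alphabet D. fst a = fst b + W (snd b) (snd a) \<and>
     (\<exists>ds. ds 0 = snd c \<and> ds k = snd b \<and> (\<forall>i\<le>k. ds i \<in> D) \<and> fst b = fst c + (\<Sum>i<k. W (ds i) (ds (Suc i)))))"
  proof (rule bex_cong[OF refl])
    fix b :: "'g \<times> 'd" assume b: "b \<in> alphabet D"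
    have "snd a \<in> D" using Suc.prems unfolding alphabet_def by auto
    then show "(0 < subst_matrix D W a b \<and> 0 < mat_pow (alphabet D) (subst_matrix D W) k b c) \<longleftrightarrow>
       (fst a = fst b + W (snd b) (snd a) \<and>
     (\<exists>ds. ds 0 = snd c \<and> ds k = snd b \<and> (\<forall>i\<le>k. ds i \<in> D) \<and> fst b = fst c + (\<Sum>i<k. W (ds i) (ds (Suc i)))))"
      using Suc.IH[OF b] M_pos[of D W a b] by simp
  qed
  also have "\<dots> \<longleftrightarrow> (\<exists>ds. ds 0 = snd c \<and> ds (Suc k) = snd a \<and> (\<forall>i\<le>Suc k. ds i \<in> D) \<and>
      fst a = fst c + (\<Sum>i<Suc k. W (ds i) (ds (Suc i))))"
  proof
    assume "\<exists>b\<in>alphabet D. fst a = fst b + W (snd b) (snd a) \<and>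
     (\<exists>ds. ds 0 = snd c \<and> ds k = snd b \<and> (\<forall>i\<le>k. ds i \<in> D) \<and> fst b = fst c + (\<Sum>i<k. W (ds i) (ds (Suc i))))"
    then obtain b ds where b: "b \<in> alphabet D" "fst a = fst b + W (snd b) (snd a)"
      "ds 0 = snd c" "ds k = snd b" "\<forall>i\<le>k. ds i \<in> D" "fst b = fst c + (\<Sum>i<k. W (ds i) (ds (Suc i)))"
      by blast
    define ds' where "ds' = ds(Suc k := snd a)"
    have "(\<Sum>i<k. W (ds' i) (ds' (Suc i))) = (\<Sum>i<k. W (ds i) (ds (Suc i)))"
      unfolding ds'_def by (intro sum.cong) auto
    then have "fst a = fst c + (\<Sum>i<Suc k. W (ds' i) (ds' (Suc i)))"
      using b by (simp add: ds'_def algebra_simps)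
    moreover have "\<forall>i\<le>Suc k. ds' i \<in> D" using b Suc.prems unfolding ds'_def alphabet_def
      by (auto simp: le_Suc_eq)
    moreover have "ds' 0 = snd c" "ds' (Suc k) = snd a" using b(3) unfolding ds'_def by simp_all
    ultimately show "\<exists>ds. ds 0 = snd c \<and> ds (Suc k) = snd a \<and> (\<forall>i\<le>Suc k. ds i \<in> D) \<and>
      fst a = fst c + (\<Sum>i<Suc k. W (ds i) (ds (Suc i)))"
      by blast
  next
    assume "\<exists>ds. ds 0 = snd c \<and> ds (Suc k) = snd a \<and> (\<forall>i\<le>Suc k. ds i \<in> D) \<and>
      fst a = fst c + (\<Sum>i<Suc k. W (ds i) (ds (Suc i)))"
    then obtain ds where ds: "ds 0 = snd c" "ds (Suc k) = snd a" "\<forall>i\<le>Suc k. ds i \<in> D"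
      "fst a = fst c + (\<Sum>i<Suc k. W (ds i) (ds (Suc i)))" by blast
    define b where "b = (fst c + (\<Sum>i<k. W (ds i) (ds (Suc i))), ds k)"
    have "b \<in> alphabet D" using ds(3) unfolding b_def alphabet_def by auto
    moreover have "fst a = fst b + W (snd b) (snd a)" using ds unfolding b_def by (simp add: algebra_simps)
    ultimately show "\<exists>b\<in>alphabet D. fst a = fst b + W (snd b) (snd a) \<and>
     (\<exists>ds. ds 0 = snd c \<and> ds k = snd b \<and> (\<forall>i\<le>k. ds i \<in> D) \<and> fst b = fst c + (\<Sum>i<k. W (ds i) (ds (Suc i))))"
    proof (intro bexI[of _ b] conjI)
      show "\<exists>ds'. ds' 0 = snd c \<and> ds' k = snd b \<and> (\<forall>i\<le>k. ds' i \<in> D) \<and> fst b = fst c + (\<Sum>i<k. W (ds' i) (ds' (Suc i)))"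
        using ds unfolding b_def by (intro exI[of _ ds]) simp
    qed
  qed
  finally show ?case .
qed



lemma primitive_conn:
  fixes W :: "'d \<Rightarrow> 'd \<Rightarrow> 'g::{finite,ab_group_add}"
  assumes ne: "D \<noteq> {}"
  shows "primitive D W \<longleftrightarrow> finite D \<and> (\<exists>k\<ge>1. conn D W k)"
proof (cases "finite D")
  case False
  obtain d where d: "d \<in> D" using ne by blast
  have inf: "infinite (alphabet D :: ('g \<times> 'd) set)" unfolding alphabet_def
    using False d by (auto dest: finite_cartesian_productD2)
  have "\<not> primitive D W"
  proof
    assume "primitive D W"
    then obtain k where k: "k \<ge> 1" "\<forall>a\<in>alphabet D. \<forall>b\<in>alphabet D. 0 < mat_pow (alphabet D) (subst_matrix D W) k a b"
      unfolding primitive_def by blast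
    then obtain j where j: "k = Suc j" by (cases k) auto
    have "((0::'g), d) \<in> alphabet D" using d unfolding alphabet_def by auto
    then show False using k(2) inf unfolding j by auto
  qed
  then show ?thesis using False by simp
next
  case True
  have "(\<forall>a\<in>alphabet D. \<forall>c\<in>alphabet D. 0 < mat_pow (alphabet D) (subst_matrix D W) k a c) \<longleftrightarrow> conn D W k" for k
  proof
    assume h: "\<forall>a\<in>alphabet D. \<forall>c\<in>alphabet D. 0 < mat_pow (alphabet D) (subst_matrix D W) k a c"
    show "conn D W k" unfolding conn_def
    proof (intro ballI allI)
      fix d0 d and h' :: 'g assume dd: "d0 \<in> D" "d \<in> D"
      have "(0::'g, d0) \<in> alphabet D" "(h', d) \<in> alphabet D" using dd unfolding alphabet_def by auto
      then have "0 < mat_pow (alphabet D) (subst_matrix D W) k (h', d) (0, d0)" using h by blast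
      then have "\<exists>ds. ds 0 = snd (0::'g, d0) \<and> ds k = snd (h', d) \<and> (\<forall>i\<le>k. ds i \<in> D) \<and>
          fst (h', d) = fst (0::'g, d0) + (\<Sum>i<k. W (ds i) (ds (Suc i)))"
        using pow_pos[OF True \<open>(0::'g, d0) \<in> alphabet D\<close> \<open>(h', d) \<in> alphabet D\<close>, of W k] by blast
      then show "\<exists>ds. ds 0 = d0 \<and> ds k = d \<and> (\<forall>i\<le>k. ds i \<in> D) \<and> h' = (\<Sum>i<k. W (ds i) (ds (Suc i)))"
        by simp
    qed
  next
    assume h: "conn D W k"
    show "\<forall>a\<in>alphabet D. \<forall>c\<in>alphabet D. 0 < mat_pow (alphabet D) (subst_matrix D W) k a c"
    proof (intro ballI)
      fix a c :: "'g \<times> 'd" assume ac: "a \<in> alphabet D" "c \<in> alphabet D"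
      then have "snd a \<in> D" "snd c \<in> D" unfolding alphabet_def by auto
      then obtain ds where ds: "ds 0 = snd c \<and> ds k = snd a \<and> (\<forall>i\<le>k. ds i \<in> D) \<and>
          fst a - fst c = (\<Sum>i<k. W (ds i) (ds (Suc i)))"
        using connD[OF h, of "snd c" "snd a" "fst a - fst c"] by blast
      then have "fst a = fst c + (\<Sum>i<k. W (ds i) (ds (Suc i)))" by (simp add: algebra_simps)
      then have "\<exists>ds. ds 0 = snd c \<and> ds k = snd a \<and> (\<forall>i\<le>k. ds i \<in> D) \<and> fst a = fst c + (\<Sum>i<k. W (ds i) (ds (Suc i)))"
        using ds by blast
      then show "0 < mat_pow (alphabet D) (subst_matrix D W) k a c"
        using pow_pos[OF True ac(2) ac(1), of W k] by blast
    qed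
  qed
  then show ?thesis using True unfolding primitive_def by simp
qed



lemma conn_Suc:
  assumes ne: "D \<noteq> {}" and h: "conn D W k"
  shows "conn D W (Suc k)"
  unfolding conn_def
proof (intro ballI allI)
  fix d0 d h' assume dd: "d0 \<in> D" "d \<in> D"
  obtain e where e: "e \<in> D" using ne by blast
  obtain ds where ds: "ds 0 = e" "ds k = d" "\<forall>i\<le>k. ds i \<in> D"
     "h' - W d0 e = (\<Sum>i<k. W (ds i) (ds (Suc i)))"
    using connD[OF h e dd(2), of "h' - W d0 e"] by blast
  define ds' where "ds' i = (case i of 0 \<Rightarrow> d0 | Suc j \<Rightarrow> ds j)" for i
  have "(\<Sum>i<Suc k. W (ds' i) (ds' (Suc i))) = W (ds' 0) (ds' (Suc 0)) + (\<Sum>i<k. W (ds' (Suc i)) (ds' (Suc (Suc i))))"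
    by (rule sum.lessThan_Suc_shift)
  also have "\<dots> = h'" using ds by (simp add: ds'_def algebra_simps)
  finally have "h' = (\<Sum>i<Suc k. W (ds' i) (ds' (Suc i)))" by simp
  moreover have "\<forall>i\<le>Suc k. ds' i \<in> D"
  proof (intro allI impI)
    fix i assume "i \<le> Suc k"
    then show "ds' i \<in> D" using ds(3) dd(1) by (cases i) (simp_all add: ds'_def)
  qed
  moreover have "ds' 0 = d0" "ds' (Suc k) = d" using ds(2) by (simp_all add: ds'_def)
  ultimately show "\<exists>ds. ds 0 = d0 \<and> ds (Suc k) = d \<and> (\<forall>i\<le>Suc k. ds i \<in> D) \<and>
      h' = (\<Sum>i<Suc k. W (ds i) (ds (Suc i)))"
    by blast
qed

lemma conn_mono:
  assumes ne: "D \<noteq> {}" and h: "conn D W k" and le: "k \<le> k'"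
  shows "conn D W k'"
  using le h
proof (induction k' rule: dec_induct)
  case base then show ?case by simp
next
  case (step n) then show ?case using conn_Suc[OF ne] by simp
qed




lemma conn_prod:
  fixes W :: "'d \<Rightarrow> 'd \<Rightarrow> 'g1::ab_group_add \<times> 'g2::ab_group_add"
  assumes bij: "bij_betw \<phi> D (D1 \<times> D2)"
    and Wr: "\<forall>d\<in>D. \<forall>d'\<in>D. W d d' = (W1 (fst (\<phi> d)) (fst (\<phi> d')), W2 (snd (\<phi> d)) (snd (\<phi> d')))"
    and ne: "D1 \<noteq> {}" "D2 \<noteq> {}"
  shows "conn D W k \<longleftrightarrow> conn D1 W1 k \<and> conn D2 W2 k"
proof -
  define \<psi> where "\<psi> = inv_into D \<phi>"
  have \<psi>1: "p \<in> D1 \<times> D2 \<Longrightarrow> \<psi> p \<in> D \<and> \<phi> (\<psi> p) = p" for p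
    using bij unfolding \<psi>_def bij_betw_def by (auto intro: inv_into_into f_inv_into_f)
  have \<phi>1: "d \<in> D \<Longrightarrow> fst (\<phi> d) \<in> D1 \<and> snd (\<phi> d) \<in> D2" for d
  proof -
    assume "d \<in> D"
    then have "\<phi> d \<in> D1 \<times> D2" using bij unfolding bij_betw_def by blast
    then show ?thesis by (simp add: mem_Times_iff)
  qed
  have \<psi>\<phi>: "d \<in> D \<Longrightarrow> \<psi> (\<phi> d) = d" for d
    using bij unfolding \<psi>_def bij_betw_def by (simp add: inv_into_f_f)
  have sumW: "(\<Sum>i<k. W (ds i) (ds (Suc i))) =
     ((\<Sum>i<k. W1 (fst (\<phi> (ds i))) (fst (\<phi> (ds (Suc i))))), (\<Sum>i<k. W2 (snd (\<phi> (ds i))) (snd (\<phi> (ds (Suc i))))))"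
    if "\<forall>i\<le>k. ds i \<in> D" for ds
  proof -
    have "(\<Sum>i<k. W (ds i) (ds (Suc i))) =
       (\<Sum>i<k. (W1 (fst (\<phi> (ds i))) (fst (\<phi> (ds (Suc i)))), W2 (snd (\<phi> (ds i))) (snd (\<phi> (ds (Suc i))))))"
    proof (rule sum.cong[OF refl])
      fix i assume "i \<in> {..<k}"
      then have "ds i \<in> D" "ds (Suc i) \<in> D" using that by auto
      then show "W (ds i) (ds (Suc i)) = (W1 (fst (\<phi> (ds i))) (fst (\<phi> (ds (Suc i)))), W2 (snd (\<phi> (ds i))) (snd (\<phi> (ds (Suc i)))))"
        using Wr by blast
    qed
    then show ?thesis by (simp add: sum_prod)
  qed
  obtain x1 where x1: "x1 \<in> D1" using ne by blast
  obtain x2 where x2: "x2 \<in> D2" using ne by blast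
  show ?thesis
  proof
    assume h: "conn D W k"
    have "conn D1 W1 k" unfolding conn_def
    proof (intro ballI allI)
      fix a b and h1 :: 'g1 assume ab: "a \<in> D1" "b \<in> D1"
      have p: "\<psi> (a, x2) \<in> D" "\<psi> (b, x2) \<in> D" "\<phi> (\<psi> (a, x2)) = (a, x2)" "\<phi> (\<psi> (b, x2)) = (b, x2)"
        using \<psi>1 ab x2 by auto
      obtain ds where ds: "ds 0 = \<psi> (a, x2)" "ds k = \<psi> (b, x2)" "\<forall>i\<le>k. ds i \<in> D"
        "(h1, 0) = (\<Sum>i<k. W (ds i) (ds (Suc i)))"
        using connD[OF h p(1,2), of "(h1, 0)"] by blast
      have "ds1 0 = a" "ds1 k = b" "\<forall>i\<le>k. ds1 i \<in> D1" "h1 = (\<Sum>i<k. W1 (ds1 i) (ds1 (Suc i)))"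
        if "ds1 = (\<lambda>i. fst (\<phi> (ds i)))" for ds1
        using that ds p \<phi>1 sumW[OF ds(3)] by auto
      then show "\<exists>ds. ds 0 = a \<and> ds k = b \<and> (\<forall>i\<le>k. ds i \<in> D1) \<and> h1 = (\<Sum>i<k. W1 (ds i) (ds (Suc i)))"
        by blast
    qed
    moreover have "conn D2 W2 k" unfolding conn_def
    proof (intro ballI allI)
      fix a b and h1 :: 'g2 assume ab: "a \<in> D2" "b \<in> D2"
      have p: "\<psi> (x1, a) \<in> D" "\<psi> (x1, b) \<in> D" "\<phi> (\<psi> (x1, a)) = (x1, a)" "\<phi> (\<psi> (x1, b)) = (x1, b)"
        using \<psi>1 ab x1 by auto
      obtain ds where ds: "ds 0 = \<psi> (x1, a)" "ds k = \<psi> (x1, b)" "\<forall>i\<le>k. ds i \<in> D"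
        "(0, h1) = (\<Sum>i<k. W (ds i) (ds (Suc i)))"
        using connD[OF h p(1,2), of "(0, h1)"] by blast
      have "ds1 0 = a" "ds1 k = b" "\<forall>i\<le>k. ds1 i \<in> D2" "h1 = (\<Sum>i<k. W2 (ds1 i) (ds1 (Suc i)))"
        if "ds1 = (\<lambda>i. snd (\<phi> (ds i)))" for ds1
        using that ds p \<phi>1 sumW[OF ds(3)] by auto
      then show "\<exists>ds. ds 0 = a \<and> ds k = b \<and> (\<forall>i\<le>k. ds i \<in> D2) \<and> h1 = (\<Sum>i<k. W2 (ds i) (ds (Suc i)))"
        by blast
    qed
    ultimately show "conn D1 W1 k \<and> conn D2 W2 k" by blast
  next
    assume h: "conn D1 W1 k \<and> conn D2 W2 k"
    show "conn D W k" unfolding conn_def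
    proof (intro ballI allI)
      fix a b and h' :: "'g1 \<times> 'g2" assume ab: "a \<in> D" "b \<in> D"
      obtain ds1 where ds1: "ds1 0 = fst (\<phi> a)" "ds1 k = fst (\<phi> b)" "\<forall>i\<le>k. ds1 i \<in> D1"
        "fst h' = (\<Sum>i<k. W1 (ds1 i) (ds1 (Suc i)))"
        using connD[of D1 W1 k "fst (\<phi> a)" "fst (\<phi> b)" "fst h'"] h \<phi>1 ab by blast
      obtain ds2 where ds2: "ds2 0 = snd (\<phi> a)" "ds2 k = snd (\<phi> b)" "\<forall>i\<le>k. ds2 i \<in> D2"
        "snd h' = (\<Sum>i<k. W2 (ds2 i) (ds2 (Suc i)))"
        using connD[of D2 W2 k "snd (\<phi> a)" "snd (\<phi> b)" "snd h'"] h \<phi>1 ab by blast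
      define ds where "ds i = \<psi> (ds1 i, ds2 i)" for i
      have dsD: "\<forall>i\<le>k. ds i \<in> D \<and> \<phi> (ds i) = (ds1 i, ds2 i)"
        using \<psi>1 ds1(3) ds2(3) unfolding ds_def by auto
      have "ds 0 = \<psi> (\<phi> a)" "ds k = \<psi> (\<phi> b)" unfolding ds_def using ds1 ds2 by simp_all
      then have e: "ds 0 = a" "ds k = b" using \<psi>\<phi> ab by simp_all
      have "(\<Sum>i<k. W1 (fst (\<phi> (ds i))) (fst (\<phi> (ds (Suc i))))) = (\<Sum>i<k. W1 (ds1 i) (ds1 (Suc i)))"
        using dsD by (intro sum.cong) auto
      moreover have "(\<Sum>i<k. W2 (snd (\<phi> (ds i))) (snd (\<phi> (ds (Suc i))))) = (\<Sum>i<k. W2 (ds2 i) (ds2 (Suc i)))"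
        using dsD by (intro sum.cong) auto
      ultimately have "h' = (\<Sum>i<k. W (ds i) (ds (Suc i)))"
        using sumW[of ds] dsD ds1(4) ds2(4) by (simp add: prod_eq_iff)
      then show "\<exists>ds. ds 0 = a \<and> ds k = b \<and> (\<forall>i\<le>k. ds i \<in> D) \<and> h' = (\<Sum>i<k. W (ds i) (ds (Suc i)))"
        using e dsD by blast
    qed
  qed
qed


lemma cross_prod:
  assumes bij: "bij_betw \<phi> D (D1 \<times> D2)"
    and A: "\<forall>d\<in>D. \<forall>e\<in>D. A d e = A1 (fst (\<phi> d)) (fst (\<phi> e)) * A2 (snd (\<phi> d)) (snd (\<phi> e))"
    and nz1: "\<forall>d\<in>D1. \<forall>e\<in>D1. A1 d e \<noteq> 0"
    and nz2: "\<forall>d\<in>D2. \<forall>e\<in>D2. A2 d e \<noteq> 0"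
    and ne: "D1 \<noteq> {}" "D2 \<noteq> {}"
  shows "cross D A \<longleftrightarrow> cross D1 A1 \<and> cross D2 A2"
proof -
  define \<psi> where "\<psi> = inv_into D \<phi>"
  have \<psi>1: "p \<in> D1 \<times> D2 \<Longrightarrow> \<psi> p \<in> D \<and> \<phi> (\<psi> p) = p" for p
    using bij unfolding \<psi>_def bij_betw_def by (auto intro: inv_into_into f_inv_into_f)
  have \<phi>1: "d \<in> D \<Longrightarrow> fst (\<phi> d) \<in> D1 \<and> snd (\<phi> d) \<in> D2" for d
  proof -
    assume "d \<in> D"
    then have "\<phi> d \<in> D1 \<times> D2" using bij unfolding bij_betw_def by blast
    then show ?thesis by (simp add: mem_Times_iff)
  qed
  obtain x1 where x1: "x1 \<in> D1" using ne by blast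
  obtain x2 where x2: "x2 \<in> D2" using ne by blast
  show ?thesis
  proof
    assume h: "cross D A"
    have "cross D1 A1" unfolding cross_def
    proof (intro ballI)
      fix a a' b b' assume ab: "a \<in> D1" "a' \<in> D1" "b \<in> D1" "b' \<in> D1"
      have p: "\<psi> (a, x2) \<in> D" "\<psi> (a', x2) \<in> D" "\<psi> (b, x2) \<in> D" "\<psi> (b', x2) \<in> D"
        "\<phi> (\<psi> (a, x2)) = (a, x2)" "\<phi> (\<psi> (a', x2)) = (a', x2)"
        "\<phi> (\<psi> (b, x2)) = (b, x2)" "\<phi> (\<psi> (b', x2)) = (b', x2)"
        using \<psi>1 ab x2 by auto
      define c where "c = A2 x2 x2"
      have c: "c * c \<noteq> 0" using nz2 x2 unfolding c_def by simp
      have "A (\<psi> (a, x2)) (\<psi> (b, x2)) * A (\<psi> (a', x2)) (\<psi> (b', x2)) =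
            A (\<psi> (a, x2)) (\<psi> (b', x2)) * A (\<psi> (a', x2)) (\<psi> (b, x2))"
        using h p(1-4) unfolding cross_def by blast
      then have "(A1 a b * A1 a' b') * (c * c) = (A1 a b' * A1 a' b) * (c * c)"
        using A p unfolding c_def by (simp add: algebra_simps)
      then show "A1 a b * A1 a' b' = A1 a b' * A1 a' b" using c by simp
    qed
    moreover have "cross D2 A2" unfolding cross_def
    proof (intro ballI)
      fix a a' b b' assume ab: "a \<in> D2" "a' \<in> D2" "b \<in> D2" "b' \<in> D2"
      have p: "\<psi> (x1, a) \<in> D" "\<psi> (x1, a') \<in> D" "\<psi> (x1, b) \<in> D" "\<psi> (x1, b') \<in> D"
        "\<phi> (\<psi> (x1, a)) = (x1, a)" "\<phi> (\<psi> (x1, a')) = (x1, a')"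
        "\<phi> (\<psi> (x1, b)) = (x1, b)" "\<phi> (\<psi> (x1, b')) = (x1, b')"
        using \<psi>1 ab x1 by auto
      define c where "c = A1 x1 x1"
      have c: "c * c \<noteq> 0" using nz1 x1 unfolding c_def by simp
      have "A (\<psi> (x1, a)) (\<psi> (x1, b)) * A (\<psi> (x1, a')) (\<psi> (x1, b')) =
            A (\<psi> (x1, a)) (\<psi> (x1, b')) * A (\<psi> (x1, a')) (\<psi> (x1, b))"
        using h p(1-4) unfolding cross_def by blast
      then have "(A2 a b * A2 a' b') * (c * c) = (A2 a b' * A2 a' b) * (c * c)"
        using A p unfolding c_def by (simp add: algebra_simps)
      then show "A2 a b * A2 a' b' = A2 a b' * A2 a' b" using c by simp
    qed
    ultimately show "cross D1 A1 \<and> cross D2 A2" by blast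
  next
    assume h: "cross D1 A1 \<and> cross D2 A2"
    show "cross D A" unfolding cross_def
    proof (intro ballI)
      fix d d' e e' assume dd: "d \<in> D" "d' \<in> D" "e \<in> D" "e' \<in> D"
      have h1: "A1 (fst (\<phi> d)) (fst (\<phi> e)) * A1 (fst (\<phi> d')) (fst (\<phi> e')) =
                A1 (fst (\<phi> d)) (fst (\<phi> e')) * A1 (fst (\<phi> d')) (fst (\<phi> e))"
        using h \<phi>1[OF dd(1)] \<phi>1[OF dd(2)] \<phi>1[OF dd(3)] \<phi>1[OF dd(4)] unfolding cross_def by blast
      have h2: "A2 (snd (\<phi> d)) (snd (\<phi> e)) * A2 (snd (\<phi> d')) (snd (\<phi> e')) =
                A2 (snd (\<phi> d)) (snd (\<phi> e')) * A2 (snd (\<phi> d')) (snd (\<phi> e))"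
        using h \<phi>1[OF dd(1)] \<phi>1[OF dd(2)] \<phi>1[OF dd(3)] \<phi>1[OF dd(4)] unfolding cross_def by blast
      have "A d e * A d' e' = (A1 (fst (\<phi> d)) (fst (\<phi> e)) * A1 (fst (\<phi> d')) (fst (\<phi> e'))) *
             (A2 (snd (\<phi> d)) (snd (\<phi> e)) * A2 (snd (\<phi> d')) (snd (\<phi> e')))"
        using A dd by (simp add: algebra_simps)
      also have "\<dots> = (A1 (fst (\<phi> d)) (fst (\<phi> e')) * A1 (fst (\<phi> d')) (fst (\<phi> e))) *
             (A2 (snd (\<phi> d)) (snd (\<phi> e')) * A2 (snd (\<phi> d')) (snd (\<phi> e)))"
        using h1 h2 by simp
      also have "\<dots> = A d e' * A d' e"
        using A dd by (simp add: algebra_simps)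
      finally show "A d e * A d' e' = A d e' * A d' e" .
    qed
  qed
qed

lemma unitary_infinite:
  assumes "infinite D" "D \<noteq> {}"
  shows "\<not> unitary_on D U"
proof
  assume u: "unitary_on D U"
  obtain d where d: "d \<in> D" using assms(2) by blast
  have "(\<Sum>e\<in>D. U d e * cnj (U d e)) = (if d = d then 1 else 0)"
    using u d unfolding unitary_on_def by blast
  then show False using assms(1) by simp
qed

lemma residue_ne: "digit_system Q D \<Longrightarrow> D \<noteq> {}"
  unfolding digit_system_def complete_residue_system_def by blast

lemma char_norm: "character chi \<Longrightarrow> cmod (chi x) = 1"
  unfolding character_def by blast


theorem proposition5p3:
  fixes Q1 :: "int^'m1^'m1" and D1 :: "(int^'m1) set"
    and W1 :: "int^'m1 \<Rightarrow> int^'m1 \<Rightarrow> 'g1::{finite,ab_group_add}"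
    and Q2 :: "int^'m2^'m2" and D2 :: "(int^'m2) set"
    and W2 :: "int^'m2 \<Rightarrow> int^'m2 \<Rightarrow> 'g2::{finite,ab_group_add}"
    and Q :: "int^'m^'m" and D :: "(int^'m) set"
    and W :: "int^'m \<Rightarrow> int^'m \<Rightarrow> 'g1 \<times> 'g2"
    and \<phi> :: "int^'m \<Rightarrow> (int^'m1) \<times> (int^'m2)"
  assumes "digit_system Q1 D1" and "digit_system Q2 D2" and "digit_system Q D"
    and "card D = card D1 * card D2"
    and "bij_betw \<phi> D (D1 \<times> D2)"
    and "\<forall>d\<in>D. \<forall>d'\<in>D. W d d' =
           (W1 (fst (\<phi> d)) (fst (\<phi> d')), W2 (snd (\<phi> d)) (snd (\<phi> d')))"
  shows "(primitive D W \<longleftrightarrow> primitive D1 W1 \<and> primitive D2 W2) \<and>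
         (\<forall>chi1 chi2. character chi1 \<and> character chi2 \<longrightarrow>
            (chi_unitary D W (char_tensor chi1 chi2) \<longleftrightarrow> chi_unitary D1 W1 chi1 \<and> chi_unitary D2 W2 chi2) \<and>
            (chi_rank1 D W (char_tensor chi1 chi2) \<longleftrightarrow> chi_rank1 D1 W1 chi1 \<and> chi_rank1 D2 W2 chi2))"
  proof -
  have ne: "D \<noteq> {}" "D1 \<noteq> {}" "D2 \<noteq> {}" using assms(1-3) residue_ne by blast+
  note bij = assms(5)
  note Wr = assms(6)
  have finD: "finite D \<longleftrightarrow> finite D1 \<and> finite D2"
    using bij_betw_finite[OF bij] ne finite_cartesian_product_iff[of D1 D2] by blast
  have P: "primitive D W \<longleftrightarrow> primitive D1 W1 \<and> primitive D2 W2"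
  proof -
    have "primitive D W \<longleftrightarrow> finite D \<and> (\<exists>k\<ge>1. conn D W k)" by (rule primitive_conn[OF ne(1)])
    also have "\<dots> \<longleftrightarrow> (finite D1 \<and> (\<exists>k\<ge>1. conn D1 W1 k)) \<and> (finite D2 \<and> (\<exists>k\<ge>1. conn D2 W2 k))"
    proof
      assume "finite D \<and> (\<exists>k\<ge>1. conn D W k)"
      then show "(finite D1 \<and> (\<exists>k\<ge>1. conn D1 W1 k)) \<and> (finite D2 \<and> (\<exists>k\<ge>1. conn D2 W2 k))"
        using finD conn_prod[OF bij Wr ne(2,3)] by blast
    next
      assume h: "(finite D1 \<and> (\<exists>k\<ge>1. conn D1 W1 k)) \<and> (finite D2 \<and> (\<exists>k\<ge>1. conn D2 W2 k))"
      then obtain k1 k2 where k: "k1 \<ge> 1" "conn D1 W1 k1" "k2 \<ge> 1" "conn D2 W2 k2" by blast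
      have "conn D1 W1 (max k1 k2)" "conn D2 W2 (max k1 k2)"
        using conn_mono[OF ne(2) k(2)] conn_mono[OF ne(3) k(4)] by simp_all
      then have "conn D W (max k1 k2)" using conn_prod[OF bij Wr ne(2,3)] by blast
      moreover have "max k1 k2 \<ge> 1" using k by simp
      ultimately show "finite D \<and> (\<exists>k\<ge>1. conn D W k)" using h finD by blast
    qed
    also have "\<dots> \<longleftrightarrow> primitive D1 W1 \<and> primitive D2 W2"
      using primitive_conn[OF ne(2), of W1] primitive_conn[OF ne(3), of W2] by simp
    finally show ?thesis .
  qed
  have C: "(chi_unitary D W (char_tensor chi1 chi2) \<longleftrightarrow> chi_unitary D1 W1 chi1 \<and> chi_unitary D2 W2 chi2) \<and>
           (chi_rank1 D W (char_tensor chi1 chi2) \<longleftrightarrow> chi_rank1 D1 W1 chi1 \<and> chi_rank1 D2 W2 chi2)"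
    if ch: "character chi1" "character chi2" for chi1 chi2
  proof -
    define A where "A = chi_matrix (char_tensor chi1 chi2) W"
    define A1 where "A1 = chi_matrix chi1 W1"
    define A2 where "A2 = chi_matrix chi2 W2"
    have Arel: "\<forall>d\<in>D. \<forall>e\<in>D. A d e = A1 (fst (\<phi> d)) (fst (\<phi> e)) * A2 (snd (\<phi> d)) (snd (\<phi> e))"
      using Wr unfolding A_def A1_def A2_def chi_matrix_def char_tensor_def by simp
    have ArelT: "\<forall>d\<in>D. \<forall>e\<in>D. (\<lambda>d e. A e d) d e =
        (\<lambda>d e. A1 e d) (fst (\<phi> d)) (fst (\<phi> e)) * (\<lambda>d e. A2 e d) (snd (\<phi> d)) (snd (\<phi> e))"
      using Arel by simp
    have m1: "\<forall>d. \<forall>e. cmod (A1 d e) = 1" unfolding A1_def chi_matrix_def using char_norm[OF ch(1)] by simp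
    have m2: "\<forall>d. \<forall>e. cmod (A2 d e) = 1" unfolding A2_def chi_matrix_def using char_norm[OF ch(2)] by simp
    have m: "\<forall>d. \<forall>e. cmod (A d e) = 1" unfolding A_def chi_matrix_def char_tensor_def
      using char_norm[OF ch(1)] char_norm[OF ch(2)] by (simp add: norm_mult)
    have U: "chi_unitary D W (char_tensor chi1 chi2) \<longleftrightarrow> chi_unitary D1 W1 chi1 \<and> chi_unitary D2 W2 chi2"
    proof (cases "finite D")
      case True
      then have f12: "finite D1" "finite D2" using finD by auto
      have "chi_unitary D W (char_tensor chi1 chi2) \<longleftrightarrow> offdiag D A \<and> offdiag D (\<lambda>d e. A e d)"
        unfolding chi_unitary_def A_def[symmetric] using unitary_iff[OF True] m by simp
      also have "\<dots> \<longleftrightarrow> (offdiag D1 A1 \<and> offdiag D2 A2) \<and> (offdiag D1 (\<lambda>d e. A1 e d) \<and> offdiag D2 (\<lambda>d e. A2 e d))"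
        using offdiag_prod[OF bij Arel _ _ f12 ne(2,3)] offdiag_prod[OF bij ArelT _ _ f12 ne(2,3)] m1 m2
        by simp
      also have "\<dots> \<longleftrightarrow> chi_unitary D1 W1 chi1 \<and> chi_unitary D2 W2 chi2"
      proof -
        have u1: "chi_unitary D1 W1 chi1 \<longleftrightarrow> offdiag D1 A1 \<and> offdiag D1 (\<lambda>d e. A1 e d)"
          unfolding chi_unitary_def A1_def[symmetric] using unitary_iff[OF f12(1), of A1] m1 by simp
        have u2: "chi_unitary D2 W2 chi2 \<longleftrightarrow> offdiag D2 A2 \<and> offdiag D2 (\<lambda>d e. A2 e d)"
          unfolding chi_unitary_def A2_def[symmetric] using unitary_iff[OF f12(2), of A2] m2 by simp
        show ?thesis unfolding u1 u2 by blast
      qed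
      finally show ?thesis .
    next
      case False
      then have "infinite D1 \<or> infinite D2" using finD by blast
      moreover have "\<not> chi_unitary D1 W1 chi1" if "infinite D1"
        unfolding chi_unitary_def by (rule unitary_infinite[OF that ne(2)])
      moreover have "\<not> chi_unitary D2 W2 chi2" if "infinite D2"
        unfolding chi_unitary_def by (rule unitary_infinite[OF that ne(3)])
      ultimately have "\<not> (chi_unitary D1 W1 chi1 \<and> chi_unitary D2 W2 chi2)" by blast
      moreover have "\<not> chi_unitary D W (char_tensor chi1 chi2)"
        unfolding chi_unitary_def by (rule unitary_infinite[OF False ne(1)])
      ultimately show ?thesis by blast
    qed
    have nz: "\<forall>d\<in>D. \<forall>e\<in>D. A d e \<noteq> 0"
    proof (intro ballI)
      fix d e
      show "A d e \<noteq> 0"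
      proof
        assume "A d e = 0"
        then have "cmod (A d e) = 0" by simp
        then show False using m by simp
      qed
    qed
    have nz1: "\<forall>d\<in>D1. \<forall>e\<in>D1. A1 d e \<noteq> 0"
    proof (intro ballI)
      fix d e
      show "A1 d e \<noteq> 0"
      proof
        assume "A1 d e = 0"
        then have "cmod (A1 d e) = 0" by simp
        then show False using m1 by simp
      qed
    qed
    have nz2: "\<forall>d\<in>D2. \<forall>e\<in>D2. A2 d e \<noteq> 0"
    proof (intro ballI)
      fix d e
      show "A2 d e \<noteq> 0"
      proof
        assume "A2 d e = 0"
        then have "cmod (A2 d e) = 0" by simp
        then show False using m2 by simp
      qed
    qed
    have R: "chi_rank1 D W (char_tensor chi1 chi2) \<longleftrightarrow> chi_rank1 D1 W1 chi1 \<and> chi_rank1 D2 W2 chi2"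
      unfolding chi_rank1_def A_def[symmetric] A1_def[symmetric] A2_def[symmetric]
      using rank1_iff[OF nz] rank1_iff[OF nz1] rank1_iff[OF nz2] cross_prod[OF bij Arel nz1 nz2 ne(2,3)] ne
      by simp
    show ?thesis using U R by blast
  qed
  show ?thesis using P C by blast
qed

end
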